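(* Let $A$ be a $d$-dimensional system, $B=B_1B_2$ with $B_1$ finite-dimensional and $B_2$ a qubit, and $C$ a qubit. Let $\rho_1^{AB_1},\rho_2^{AB_1}$ be states, $p_1,p_2\ge0$ with $p_1+p_2=1$, and $$\rho^{ABC}=p_1\,\rho_1^{AB_1}\otimes|\Psi^+\rangle\langle\Psi^+|^{B_2C}+p_2\,\rho_2^{AB_1}\otimes|\Psi^-\rangle\langle\Psi^-|^{B_2C},$$ with $|\Psi^\pm\rangle=(|01\rangle\pm|10\rangle)/\sqrt2$. Then for every CPTP map $\Lambda$ on system $A$, $$E^{AB|C}\big((\Lambda^A\otimes\mathrm{id}^{BC})[\rho^{ABC}]\big)=\tfrac12\big\|(\Lambda^A\otimes\mathrm{id}^{B_1})[p_1\rho_1^{AB_1}-p_2\rho_2^{AB_1}]\big\|_1 .$$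
   Context: Negativity of a bipartite operator $X$ with respect to the cut $X_1|X_2$ is $E^{X_1|X_2}(X)=\frac{\|X^{T_{X_2}}\|_1-1}{2}$, where $T_{X_2}$ is the partial transpose on $X_2$ and $\|M\|_1=\mathrm{Tr}\sqrt{M^\dagger M}$; $E^{AB|C}$ treats $AB=AB_1B_2$ as one party and $C$ as the other. *)

theory Defs
  imports Complex_Main "Jordan_Normal_Form.Matrix"
begin

text \<open>Composite systems use the Kronecker product with the
standard index ordering: index (i,k) of X (x) Y is i * dimY + k.\<close>

definition mtrace :: "complex mat \<Rightarrow> complex" where
  "mtrace M = (\<Sum>i<dim_row M. M $$ (i, i))"

definition adj :: "complex mat \<Rightarrow> complex mat" where
  "adj M = mat (dim_col M) (dim_row M) (\<lambda>(i, j). cnj (M $$ (j, i)))"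

definition kron :: "complex mat \<Rightarrow> complex mat \<Rightarrow> complex mat" where
  "kron X Y = mat (dim_row X * dim_row Y) (dim_col X * dim_col Y)
     (\<lambda>(i, j). X $$ (i div dim_row Y, j div dim_col Y) * Y $$ (i mod dim_row Y, j mod dim_col Y))"

definition psd :: "complex mat \<Rightarrow> bool" where
  "psd M \<longleftrightarrow> dim_row M = dim_col M \<and> adj M = M \<and>
     (\<forall>v \<in> carrier_vec (dim_row M).
        let q = (\<Sum>i<dim_row M. cnj (v $ i) * (M *\<^sub>v v) $ i) in Im q = 0 \<and> Re q \<ge> 0)"

definition density :: "nat \<Rightarrow> complex mat \<Rightarrow> bool" where
  "density n \<rho> \<longleftrightarrow> \<rho> \<in> carrier_mat n n \<and> psd \<rho> \<and> mtrace \<rho> = 1"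

definition msqrt :: "complex mat \<Rightarrow> complex mat" where
  "msqrt M = (THE S. S \<in> carrier_mat (dim_row M) (dim_row M) \<and> psd S \<and> S * S = M)"

definition trace_norm :: "complex mat \<Rightarrow> real" where
  "trace_norm M = Re (mtrace (msqrt (adj M * M)))"

text \<open>Partial transpose on the second factor of an (n1*n2)-dimensional bipartite operator.\<close>
definition ptrans2 :: "nat \<Rightarrow> nat \<Rightarrow> complex mat \<Rightarrow> complex mat" where
  "ptrans2 n1 n2 X = mat (n1 * n2) (n1 * n2)
     (\<lambda>(i, j). X $$ ((i div n2) * n2 + j mod n2, (j div n2) * n2 + i mod n2))"

definition negativity :: "nat \<Rightarrow> nat \<Rightarrow> complex mat \<Rightarrow> real" where
  "negativity n1 n2 X = (trace_norm (ptrans2 n1 n2 X) - 1) / 2"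

text \<open>(Lambda (x) id_n) for a map Lambda from d x d to d' x d' matrices, acting on the
first factor of a (d*n)-dimensional operator (defined blockwise, i.e. by linear extension).\<close>
definition block :: "nat \<Rightarrow> nat \<Rightarrow> nat \<Rightarrow> nat \<Rightarrow> complex mat \<Rightarrow> complex mat" where
  "block d n b c X = mat d d (\<lambda>(a, a'). X $$ (a * n + b, a' * n + c))"

definition tensor_id :: "nat \<Rightarrow> nat \<Rightarrow> nat \<Rightarrow> (complex mat \<Rightarrow> complex mat) \<Rightarrow> complex mat \<Rightarrow> complex mat" where
  "tensor_id d d' n \<Lambda> X = mat (d' * n) (d' * n)
     (\<lambda>(i, j). \<Lambda> (block d n (i mod n) (j mod n) X) $$ (i div n, j div n))"

definition cptp :: "nat \<Rightarrow> nat \<Rightarrow> (complex mat \<Rightarrow> complex mat) \<Rightarrow> bool" where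
  "cptp d d' \<Lambda> \<longleftrightarrow>
     (\<forall>X \<in> carrier_mat d d. \<Lambda> X \<in> carrier_mat d' d') \<and>
     (\<forall>X \<in> carrier_mat d d. \<forall>Y \<in> carrier_mat d d. \<Lambda> (X + Y) = \<Lambda> X + \<Lambda> Y) \<and>
     (\<forall>c. \<forall>X \<in> carrier_mat d d. \<Lambda> (c \<cdot>\<^sub>m X) = c \<cdot>\<^sub>m \<Lambda> X) \<and>
     (\<forall>X \<in> carrier_mat d d. mtrace (\<Lambda> X) = mtrace X) \<and>
     (\<forall>n. \<forall>X \<in> carrier_mat (d * n) (d * n). psd X \<longrightarrow> psd (tensor_id d d' n \<Lambda> X))"

text \<open>Bell projectors |Psi+-><Psi+-| on two qubits, basis order |00>,|01>,|10>,|11>.\<close>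
definition psi_plus_proj :: "complex mat" where
  "psi_plus_proj = mat 4 4 (\<lambda>(i, j). if i \<in> {1, 2} \<and> j \<in> {1, 2} then 1 / 2 else 0)"

definition psi_minus_proj :: "complex mat" where
  "psi_minus_proj = mat 4 4 (\<lambda>(i, j). if i \<in> {1, 2} \<and> j \<in> {1, 2}
      then (if i = j then 1 / 2 else - 1 / 2) else 0)"

end

theory Submission
  imports Defs "Jordan_Normal_Form.Spectral_Radius" "Jordan_Normal_Form.Schur_Decomposition"
begin


lemma adj_dims[simp]: "dim_row (adj A) = dim_col A" "dim_col (adj A) = dim_row A"
  by (auto simp: adj_def)

lemma adj_carrier[simp]: "A \<in> carrier_mat n m \<Longrightarrow> adj A \<in> carrier_mat m n"
  by (metis adj_dims carrier_matD carrier_matI)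

lemma adj_index[simp]: "i < dim_col A \<Longrightarrow> j < dim_row A \<Longrightarrow> adj A $$ (i,j) = cnj (A $$ (j,i))"
  by (simp add: adj_def)

lemma adj_adj[simp]: "adj (adj A) = A"
  by (rule eq_matI, auto)

lemma adj_mult: "A \<in> carrier_mat n k \<Longrightarrow> B \<in> carrier_mat k m \<Longrightarrow> adj (A * B) = adj B * adj A"
  by (rule eq_matI, auto simp: scalar_prod_def cnj_sum intro!: sum.cong)

lemma adj_add: "A \<in> carrier_mat n m \<Longrightarrow> B \<in> carrier_mat n m \<Longrightarrow> adj (A + B) = adj A + adj B"
  by (rule eq_matI, auto)

lemma adj_minus: "A \<in> carrier_mat n m \<Longrightarrow> B \<in> carrier_mat n m \<Longrightarrow> adj (A - B) = adj A - adj B"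
  by (rule eq_matI, auto)

lemma adj_smult: "adj (c \<cdot>\<^sub>m A) = cnj c \<cdot>\<^sub>m adj A"
  by (rule eq_matI, auto)

lemma adj_one[simp]: "adj (1\<^sub>m n) = 1\<^sub>m n"
  by (rule eq_matI, auto)

lemma adj_zero[simp]: "adj (0\<^sub>m n m) = 0\<^sub>m m n"
  by (rule eq_matI, auto)

lemma adj_inner: assumes "A \<in> carrier_mat n m" "x \<in> carrier_vec m" "y \<in> carrier_vec n"
  shows "(A *\<^sub>v x) \<bullet>c y = x \<bullet>c (adj A *\<^sub>v y)"
proof -
  have "(A *\<^sub>v x) \<bullet>c y = (\<Sum>i<n. (\<Sum>l<m. A $$ (i,l) * x $ l) * cnj (y $ i))"
    using assms by (simp add: scalar_prod_def atLeast0LessThan row_def)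
  also have "\<dots> = (\<Sum>i<n. \<Sum>l<m. A $$ (i,l) * x $ l * cnj (y $ i))"
    by (simp add: sum_distrib_right)
  also have "\<dots> = (\<Sum>l<m. \<Sum>i<n. A $$ (i,l) * x $ l * cnj (y $ i))"
    by (rule sum.swap)
  also have "\<dots> = (\<Sum>l<m. x $ l * cnj (\<Sum>i<n. cnj (A $$ (i,l)) * y $ i))"
    by (simp add: cnj_sum sum_distrib_left mult_ac)
  also have "\<dots> = x \<bullet>c (adj A *\<^sub>v y)"
    using assms by (simp add: scalar_prod_def atLeast0LessThan row_def)
  finally show ?thesis .
qed




definition qf :: "complex mat \<Rightarrow> complex vec \<Rightarrow> complex" where
  "qf M v = (M *\<^sub>v v) \<bullet>c v"

lemma psd_iff: "psd M \<longleftrightarrow> dim_row M = dim_col M \<and> adj M = M \<and>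
   (\<forall>v \<in> carrier_vec (dim_row M). qf M v \<ge> 0)"
proof -
  have eq: "\<And>v. v \<in> carrier_vec (dim_row M) \<Longrightarrow>
     qf M v = (\<Sum>i<dim_row M. cnj (v $ i) * (M *\<^sub>v v) $ i)"
    by (auto simp: qf_def scalar_prod_def atLeast0LessThan mult.commute intro!: sum.cong)
  show ?thesis unfolding psd_def Let_def using eq
    by (auto simp: less_eq_complex_def)
qed

lemma psdD: assumes "psd M" "M \<in> carrier_mat n n"
  shows "adj M = M" "\<And>v. v \<in> carrier_vec n \<Longrightarrow> qf M v \<ge> 0"
  using assms by (auto simp: psd_iff)

lemma psdI: assumes "M \<in> carrier_mat n n" "adj M = M" "\<And>v. v \<in> carrier_vec n \<Longrightarrow> qf M v \<ge> 0"
  shows "psd M"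
  using assms by (auto simp: psd_iff)

lemma psd_congr: assumes A: "psd A" "A \<in> carrier_mat n n" and B: "B \<in> carrier_mat n k"
  shows "psd (adj B * A * B)"
proof (rule psdI)
  show C: "adj B * A * B \<in> carrier_mat k k" using A B by auto
  have "adj (adj B * A * B) = adj B * adj (adj B * A)"
    by (rule adj_mult[of _ k n], insert A B, auto)
  also have "\<dots> = adj B * (adj A * B)" using A B by (simp add: adj_mult[of _ k n _ n])
  also have "\<dots> = adj B * A * B" using A B psdD(1)[OF A]
    by (simp add: assoc_mult_mat[of "adj B" k n A n B k])
  finally show "adj (adj B * A * B) = adj B * A * B" .
  fix v :: "complex vec" assume v: "v \<in> carrier_vec k"
  have "qf (adj B * A * B) v = (adj B *\<^sub>v (A *\<^sub>v (B *\<^sub>v v))) \<bullet>c v"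
  proof -
    have e1: "(adj B * A * B) *\<^sub>v v = (adj B * A) *\<^sub>v (B *\<^sub>v v)"
      by (rule assoc_mult_mat_vec, insert A B v, auto)
    have e2: "(adj B * A) *\<^sub>v (B *\<^sub>v v) = adj B *\<^sub>v (A *\<^sub>v (B *\<^sub>v v))"
      by (rule assoc_mult_mat_vec, insert A B v, auto)
    show ?thesis unfolding qf_def e1 e2 ..
  qed
  also have "\<dots> = (A *\<^sub>v (B *\<^sub>v v)) \<bullet>c (adj (adj B) *\<^sub>v v)"
    by (rule adj_inner[of _ k n], insert A B v, auto)
  also have "\<dots> = qf A (B *\<^sub>v v)" by (simp add: qf_def)
  also have "\<dots> \<ge> 0" using psdD(2)[OF A] B v by auto
  finally show "qf (adj B * A * B) v \<ge> 0" .
qed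

lemma psd_one: "psd (1\<^sub>m n)"
  by (rule psdI[of _ n], auto simp: qf_def)

lemma psd_gram: assumes "B \<in> carrier_mat k n" shows "psd (adj B * B)"
  using psd_congr[OF psd_one[of k] _ assms] assms by simp

lemma qf_add: assumes "A \<in> carrier_mat n n" "B \<in> carrier_mat n n" "v \<in> carrier_vec n"
  shows "qf (A + B) v = qf A v + qf B v"
  using assms unfolding qf_def
  by (simp add: add_mult_distrib_mat_vec[of _ n n] add_scalar_prod_distrib[of _ n])

lemma psd_add: assumes "psd A" "psd B" "A \<in> carrier_mat n n" "B \<in> carrier_mat n n"
  shows "psd (A + B)"
proof (rule psdI)
  show "A + B \<in> carrier_mat n n" using assms by auto
  show "adj (A + B) = A + B" using assms by (simp add: adj_add psdD)
  fix v :: "complex vec" assume "v \<in> carrier_vec n"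
  thus "qf (A + B) v \<ge> 0" using assms qf_add psdD(2) by (metis add_nonneg_nonneg)
qed

lemma smult_mat_vec: "A \<in> carrier_mat n m \<Longrightarrow> v \<in> carrier_vec m \<Longrightarrow> (c \<cdot>\<^sub>m A) *\<^sub>v v = c \<cdot>\<^sub>v (A *\<^sub>v v)"
  by (rule eq_vecI, auto simp: scalar_prod_def sum_distrib_left mult_ac)

lemma qf_smult: "A \<in> carrier_mat n n \<Longrightarrow> v \<in> carrier_vec n \<Longrightarrow> qf (c \<cdot>\<^sub>m A) v = c * qf A v"
  unfolding qf_def by (simp add: smult_mat_vec[of _ n n])

lemma psd_smult: assumes "psd A" "A \<in> carrier_mat n n" "c \<ge> 0"
  shows "psd (complex_of_real c \<cdot>\<^sub>m A)"
proof (rule psdI)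
  show "complex_of_real c \<cdot>\<^sub>m A \<in> carrier_mat n n" using assms by auto
  show "adj (complex_of_real c \<cdot>\<^sub>m A) = complex_of_real c \<cdot>\<^sub>m A" using assms by (simp add: adj_smult psdD)
  fix v :: "complex vec" assume v: "v \<in> carrier_vec n"
  have "qf A v \<ge> 0" using psdD(2)[OF assms(1,2) v] .
  thus "qf (complex_of_real c \<cdot>\<^sub>m A) v \<ge> 0" using qf_smult[OF assms(2) v] assms(3)
    by (auto simp: less_eq_complex_def)
qed

lemma mtrace_comm: assumes "A \<in> carrier_mat n k" "B \<in> carrier_mat k n"
  shows "mtrace (A * B) = mtrace (B * A)"
proof -
  have "mtrace (A * B) = (\<Sum>i<n. \<Sum>l<k. A $$ (i,l) * B $$ (l,i))"
    using assms by (simp add: mtrace_def scalar_prod_def atLeast0LessThan)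
  also have "\<dots> = (\<Sum>l<k. \<Sum>i<n. B $$ (l,i) * A $$ (i,l))"
    by (subst sum.swap, simp add: mult.commute)
  also have "\<dots> = mtrace (B * A)"
    using assms by (simp add: mtrace_def scalar_prod_def atLeast0LessThan)
  finally show ?thesis .
qed

lemma mtrace_add: "A \<in> carrier_mat n n \<Longrightarrow> B \<in> carrier_mat n n \<Longrightarrow> mtrace (A + B) = mtrace A + mtrace B"
  by (simp add: mtrace_def sum.distrib)

lemma mtrace_minus: "A \<in> carrier_mat n n \<Longrightarrow> B \<in> carrier_mat n n \<Longrightarrow> mtrace (A - B) = mtrace A - mtrace B"
  by (simp add: mtrace_def sum_subtractf)

lemma mtrace_uminus: "A \<in> carrier_mat n n \<Longrightarrow> mtrace (- A) = - mtrace A"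
  by (simp add: mtrace_def sum_negf)

lemma mtrace_smult: "A \<in> carrier_mat n n \<Longrightarrow> mtrace (c \<cdot>\<^sub>m A) = c * mtrace A"
  by (simp add: mtrace_def sum_distrib_left)

lemma mtrace_gram: assumes "B \<in> carrier_mat k n"
  shows "mtrace (adj B * B) = complex_of_real (\<Sum>i<n. \<Sum>l<k. (cmod (B $$ (l,i)))\<^sup>2)"
proof -
  have "mtrace (adj B * B) = (\<Sum>i<n. \<Sum>l<k. cnj (B $$ (l,i)) * B $$ (l,i))"
    using assms by (simp add: mtrace_def scalar_prod_def atLeast0LessThan)
  also have "\<dots> = (\<Sum>i<n. \<Sum>l<k. complex_of_real ((cmod (B $$ (l,i)))\<^sup>2))"
    by (intro sum.cong refl) (metis complex_norm_square mult.commute)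
  finally show ?thesis by simp
qed

lemma gram_zero: assumes B: "B \<in> carrier_mat k n" and t: "Re (mtrace (adj B * B)) \<le> 0"
  shows "B = 0\<^sub>m k n"
proof (rule eq_matI)
  fix l i assume l: "l < dim_row (0\<^sub>m k n)" and i: "i < dim_col (0\<^sub>m k n)"
  have "(\<Sum>i<n. \<Sum>l<k. (cmod (B $$ (l,i)))\<^sup>2) \<le> 0" using t mtrace_gram[OF B] by simp
  hence z: "(\<Sum>i<n. \<Sum>l<k. (cmod (B $$ (l,i)))\<^sup>2) = 0"
    by (meson antisym sum_nonneg zero_le_power2)
  have "\<forall>i\<in>{..<n}. (\<Sum>l<k. (cmod (B $$ (l,i)))\<^sup>2) = 0"
    using z by (subst (asm) sum_nonneg_eq_0_iff, auto intro: sum_nonneg)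
  hence "(\<Sum>l<k. (cmod (B $$ (l,i)))\<^sup>2) = 0" using i by auto
  hence "\<forall>l\<in>{..<k}. (cmod (B $$ (l,i)))\<^sup>2 = 0" by (subst (asm) sum_nonneg_eq_0_iff, auto)
  thus "B $$ (l,i) = 0\<^sub>m k n $$ (l,i)" using l i by auto
qed (insert B, auto)




lemma inner_smult: "x \<in> carrier_vec n \<Longrightarrow> y \<in> carrier_vec n \<Longrightarrow>
  (a \<cdot>\<^sub>v x) \<bullet>c (b \<cdot>\<^sub>v y) = a * cnj b * (x \<bullet>c y)"
  by (auto simp: scalar_prod_def sum_distrib_left mult_ac)

lemma adj_four_block: assumes "A \<in> carrier_mat n1 m1" "B \<in> carrier_mat n1 m2"
  "C \<in> carrier_mat n2 m1" "D \<in> carrier_mat n2 m2"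
  shows "adj (four_block_mat A B C D) = four_block_mat (adj A) (adj C) (adj B) (adj D)"
  by (rule eq_matI, insert assms, auto)

lemma cancel_left: fixes W :: "complex mat" assumes "W \<in> carrier_mat n n" "W' \<in> carrier_mat n n" "W * W' = 1\<^sub>m n" "X \<in> carrier_mat n m"
  shows "W * (W' * X) = X"
proof -
  have "W * (W' * X) = (W * W') * X" by (rule assoc_mult_mat[symmetric], insert assms, auto)
  thus ?thesis using left_mult_one_mat[OF assms(4)] assms(3) by simp
qed

lemma spectral:
  assumes "A \<in> carrier_mat n n" "adj A = A"
  shows "\<exists>U D. U \<in> carrier_mat n n \<and> D \<in> carrier_mat n n \<and> adj U * U = 1\<^sub>m n \<and> U * adj U = 1\<^sub>m n
      \<and> (\<forall>i<n. \<forall>j<n. i \<noteq> j \<longrightarrow> D $$ (i,j) = 0) \<and> A = U * D * adj U"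
  using assms
proof (induction n arbitrary: A)
  case 0
  show ?case
    by (rule exI[of _ "1\<^sub>m 0"], rule exI[of _ A], insert 0, auto intro!: eq_matI)
next
  case (Suc k A)
  define n where "n = Suc k"
  have A: "A \<in> carrier_mat n n" and hA: "adj A = A" using Suc.prems by (auto simp: n_def)
  from spectrum_non_empty[OF A] obtain e where "eigenvalue A e" unfolding spectrum_def n_def by auto
  then obtain v where ev: "eigenvector A v e" unfolding eigenvalue_def by auto
  hence v: "v \<in> carrier_vec n" and v0: "v \<noteq> 0\<^sub>v n" and Av: "A *\<^sub>v v = e \<cdot>\<^sub>v v"
    using A unfolding eigenvector_def by auto
  interpret cof_vec_space n "TYPE(complex)" .
  define b where "b = basis_completion v"
  from basis_completion[OF v v0, folded b_def]
  have dist_b: "distinct b" and indep: "\<not> lin_dep (set b)" and bc: "set b \<subseteq> carrier_vec n"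
    and hdb: "hd b = v" and len_b: "length b = n" by auto
  from hdb len_b obtain vs where bv: "b = v # vs" unfolding n_def by (cases b, auto)
  define ws where "ws = gram_schmidt n b"
  from gram_schmidt_result[OF bc dist_b indep ws_def]
  have wsc: "set ws \<subseteq> carrier_vec n" and orth: "corthogonal ws" and len_ws: "length ws = n"
    by (auto simp: len_b)
  have hdws: "hd ws = v" unfolding ws_def bv using gram_schmidt_hd[OF v] by simp
  define nv :: "complex vec \<Rightarrow> complex" where "nv w = complex_of_real (sqrt (Re (w \<bullet>c w)))" for w
  define us where "us = map (\<lambda>w. (1 / nv w) \<cdot>\<^sub>v w) ws"
  have len_us: "length us = n" using len_ws by (simp add: us_def)
  have wsi: "ws ! i \<in> carrier_vec n" if "i < n" for i using wsc len_ws that by auto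
  have usc: "us ! i \<in> carrier_vec n" if "i < n" for i using wsi[OF that] len_ws that by (auto simp: us_def)
  have orth_us: "us ! i \<bullet>c us ! j = (if i = j then 1 else 0)" if i: "i < n" and j: "j < n" for i j
  proof -
    have eq: "us ! i \<bullet>c us ! j = (1 / nv (ws!i)) * cnj (1 / nv (ws!j)) * (ws!i \<bullet>c ws!j)"
      unfolding us_def using i j len_ws inner_smult[OF wsi[OF i] wsi[OF j]] by simp
    show ?thesis
    proof (cases "i = j")
      case False
      with corthogonalD[OF orth, of i j] i j len_ws eq show ?thesis by auto
    next
      case True
      hence ji: "j = i" by simp
      have nz: "ws!i \<bullet>c ws!i \<noteq> 0" using corthogonalD[OF orth, of i i] i len_ws by auto
      have ge: "ws!i \<bullet>c ws!i \<ge> 0" by (rule conjugate_square_ge_0_vec)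
      define r where "r = Re (ws!i \<bullet>c ws!i)"
      have wr: "ws!i \<bullet>c ws!i = complex_of_real r" using ge unfolding r_def
        by (auto simp: less_eq_complex_def complex_eq_iff)
      have r: "r > 0" using ge nz wr by (auto simp: less_eq_complex_def)
      have "us ! i \<bullet>c us ! j = 1 / (complex_of_real (sqrt r) * complex_of_real (sqrt r)) * complex_of_real r"
        using eq unfolding ji nv_def wr by simp
      also have "\<dots> = 1" using r by (simp flip: of_real_mult)
      finally show ?thesis using ji by simp
    qed
  qed
  define W where "W = mat_of_cols n us"
  have W: "W \<in> carrier_mat n n" unfolding W_def using len_us by auto
  have aW0: "adj W \<in> carrier_mat n n" using W by simp
  have Widx: "W $$ (l, j) = us ! j $ l" if "l < n" "j < n" for l j
    using that len_us by (simp add: W_def mat_of_cols_def)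
  have colW: "col W j = us ! j" if "j < n" for j
    using that len_us usc[OF that] by (simp add: W_def)
  have WW: "adj W * W = 1\<^sub>m n"
  proof (rule eq_matI)
    fix i j assume "i < dim_row (1\<^sub>m n)" "j < dim_col (1\<^sub>m n)"
    hence i: "i < n" and j: "j < n" by auto
    have "(adj W * W) $$ (i,j) = (\<Sum>l<n. cnj (W $$ (l,i)) * W $$ (l,j))"
      using W i j by (simp add: scalar_prod_def atLeast0LessThan)
    also have "\<dots> = us!j \<bullet>c us!i"
      using i j usc[OF i] usc[OF j] Widx by (simp add: scalar_prod_def atLeast0LessThan mult.commute)
    also have "\<dots> = 1\<^sub>m n $$ (i,j)" using orth_us[OF j i] i j by auto
    finally show "(adj W * W) $$ (i,j) = 1\<^sub>m n $$ (i,j)" .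
  qed (insert W, auto)
  have WW': "W * adj W = 1\<^sub>m n" using mat_mult_left_right_inverse[OF adj_carrier[OF W] W WW] .
  have n0: "0 < n" by (simp add: n_def)
  have ws0: "ws ! 0 = v" using hdws len_ws n0 by (cases ws, auto)
  define c where "c = 1 / nv v"
  have col0: "col W 0 = c \<cdot>\<^sub>v v" using colW[OF n0] ws0 len_ws n0 by (simp add: us_def c_def)
  have AW0: "A *\<^sub>v col W 0 = e \<cdot>\<^sub>v col W 0"
    unfolding col0 mult_mat_vec[OF A v] Av by (auto simp: smult_smult_assoc mult.commute)
  define A' where "A' = adj W * A * W"
  have A': "A' \<in> carrier_mat n n" unfolding A'_def by (rule mult_carrier_mat[OF mult_carrier_mat[OF aW0 A] W])
  have hA': "adj A' = A'"
  proof -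
    have "adj A' = adj W * adj (adj W * A)" unfolding A'_def by (rule adj_mult[of _ n n], insert A W, auto)
    also have "\<dots> = adj W * (A * W)" using A W hA by (simp add: adj_mult[of _ n n])
    also have "\<dots> = A'" unfolding A'_def using A W by (simp add: assoc_mult_mat[of "adj W" n n A n W n])
    finally show ?thesis .
  qed
  have herm: "A' $$ (i,j) = cnj (A' $$ (j,i))" if "i < n" "j < n" for i j
  proof -
    have "A' $$ (i,j) = adj A' $$ (i,j)" using hA' by simp
    also have "\<dots> = cnj (A' $$ (j,i))" using that A' by simp
    finally show ?thesis .
  qed
  have A'0: "A' $$ (i,0) = (if i = 0 then e else 0)" if i: "i < n" for i
  proof -
    have "A' = adj W * (A * W)" unfolding A'_def using A W by (simp add: assoc_mult_mat[of "adj W" n n A n W n])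
    hence "A' $$ (i,0) = row (adj W) i \<bullet> col (A * W) 0" using A W i n0 by simp
    also have "col (A * W) 0 = e \<cdot>\<^sub>v col W 0" using col_mult2[OF A W n0] AW0 by simp
    also have "row (adj W) i \<bullet> (e \<cdot>\<^sub>v col W 0) = e * (row (adj W) i \<bullet> col W 0)"
      using W i n0 by (simp add: scalar_prod_smult_distrib[of _ n])
    also have "row (adj W) i \<bullet> col W 0 = (adj W * W) $$ (i,0)" using W i n0 by simp
    also have "\<dots> = (if i = 0 then 1 else 0)" unfolding WW using i n0 by simp
    finally show ?thesis by simp
  qed
  have ereal: "cnj e = e" using herm[OF n0 n0] A'0[OF n0] by simp
  have A'0r: "A' $$ (0,j) = (if j = 0 then e else 0)" if j: "j < n" for j
    using herm[OF n0 j] A'0[OF j] ereal by simp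
  define A3 where "A3 = mat k k (\<lambda>(i,j). A' $$ (Suc i, Suc j))"
  have A3: "A3 \<in> carrier_mat k k" by (simp add: A3_def)
  have hA3: "adj A3 = A3"
  proof (rule eq_matI)
    fix i j assume "i < dim_row A3" "j < dim_col A3"
    hence "i < k" "j < k" by (auto simp: A3_def)
    thus "adj A3 $$ (i,j) = A3 $$ (i,j)" using herm[of "Suc i" "Suc j"] by (simp add: A3_def n_def)
  qed (auto simp: A3_def)
  from Suc.IH[OF A3 hA3] obtain V D3 where V: "V \<in> carrier_mat k k" and D3: "D3 \<in> carrier_mat k k"
    and VV: "adj V * V = 1\<^sub>m k" and VV': "V * adj V = 1\<^sub>m k"
    and dD3: "\<forall>i<k. \<forall>j<k. i \<noteq> j \<longrightarrow> D3 $$ (i,j) = 0" and A3e: "A3 = V * D3 * adj V" by blast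
  define E :: "complex mat" where "E = mat 1 1 (\<lambda>_. e)"
  have E: "E \<in> carrier_mat 1 1" by (simp add: E_def)
  define V' where "V' = four_block_mat (1\<^sub>m 1) (0\<^sub>m 1 k) (0\<^sub>m k 1) V"
  define D where "D = four_block_mat E (0\<^sub>m 1 k) (0\<^sub>m k 1) D3"
  have V': "V' \<in> carrier_mat n n" unfolding V'_def n_def using V by auto
  have D: "D \<in> carrier_mat n n" unfolding D_def n_def using D3 E by auto
  have adjV': "adj V' = four_block_mat (1\<^sub>m 1) (0\<^sub>m 1 k) (0\<^sub>m k 1) (adj V)"
    unfolding V'_def using adj_four_block[of "1\<^sub>m 1" 1 1 "0\<^sub>m 1 k" k "0\<^sub>m k 1" k V] V by simp
  have aV: "adj V \<in> carrier_mat k k" using V by simp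
  have V'V': "adj V' * V' = 1\<^sub>m n"
    unfolding adjV' unfolding V'_def n_def
    by (subst mult_four_block_mat[of _ 1 1 _ k _ k _ _ 1 _ k], insert V aV VV, auto)
  have V'V'': "V' * adj V' = 1\<^sub>m n"
    unfolding adjV' unfolding V'_def n_def
    by (subst mult_four_block_mat[of _ 1 1 _ k _ k _ _ 1 _ k], insert V aV VV', auto)
  have A'b: "A' = four_block_mat E (0\<^sub>m 1 k) (0\<^sub>m k 1) A3"
    by (rule eq_matI, insert A' A'0 A'0r, auto simp: A3_def E_def n_def)
  have VD: "V' * D = four_block_mat E (0\<^sub>m 1 k) (0\<^sub>m k 1) (V * D3)"
    unfolding D_def V'_def
    by (subst mult_four_block_mat[of _ 1 1 _ k _ k _ _ 1 _ k], insert V D3 E, auto)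
  have VDV: "V' * D * adj V' = A'"
    unfolding VD adjV' A'b A3e
    by (subst mult_four_block_mat[of _ 1 1 _ k _ k _ _ 1 _ k], insert V D3 E aV, auto)
  define U where "U = W * V'"
  have U: "U \<in> carrier_mat n n" using W V' by (simp add: U_def)
  have adjU: "adj U = adj V' * adj W" unfolding U_def by (rule adj_mult[of _ n n], insert W V', auto)
  have aW: "adj W \<in> carrier_mat n n" "adj V' \<in> carrier_mat n n" using W V' by auto
  have UU: "adj U * U = 1\<^sub>m n"
    unfolding adjU unfolding U_def using W V' aW WW V'V' cancel_left[OF aW(1) W WW V']
    by (simp add: assoc_mult_mat[of "adj V'" n n "adj W" n _ n])
  have UU': "U * adj U = 1\<^sub>m n"
  proof -
    have c: "adj V' * adj W \<in> carrier_mat n n" using aW by (metis mult_carrier_mat)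
    show ?thesis
      unfolding adjU unfolding U_def using W V' aW WW' V'V'' cancel_left[OF V' aW(2) V'V'' aW(1)]
      by (simp add: assoc_mult_mat[OF W V' c])
  qed
  have "A = W * A' * adj W"
  proof -
    have m1: "adj W * A \<in> carrier_mat n n" using aW0 A by (metis mult_carrier_mat)
    have m2: "adj W * A * W \<in> carrier_mat n n" using m1 W by (metis mult_carrier_mat)
    have "W * (adj W * A * W) * adj W = W * (adj W * A * W * adj W)" by (rule assoc_mult_mat[OF W m2 aW0])
    also have "adj W * A * W * adj W = adj W * A * (W * adj W)" by (rule assoc_mult_mat[OF m1 W aW0])
    also have "\<dots> = adj W * A" using WW' m1 by (simp add: right_mult_one_mat)
    also have "W * (adj W * A) = A" by (rule cancel_left[OF W aW0 WW' A])
    finally show ?thesis unfolding A'_def by simp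
  qed
  also have "\<dots> = U * D * adj U"
  proof -
    have c2: "V' * D \<in> carrier_mat n n" using V' D by (metis mult_carrier_mat)
    have c1: "W * (V' * D) \<in> carrier_mat n n" using W c2 by (metis mult_carrier_mat)
    have "W * (V' * D) * (adj V' * adj W) = W * (V' * D) * adj V' * adj W"
      by (rule assoc_mult_mat[symmetric, OF c1 aW(2) aW0])
    also have "W * (V' * D) * adj V' = W * (V' * D * adj V')" by (rule assoc_mult_mat[OF W c2 aW(2)])
    finally show ?thesis unfolding VDV[symmetric] adjU unfolding U_def
      using assoc_mult_mat[OF W V' D] by simp
  qed
  finally have AU: "A = U * D * adj U" .
  have dD: "\<forall>i<n. \<forall>j<n. i \<noteq> j \<longrightarrow> D $$ (i,j) = 0"
    using dD3 D3 E by (auto simp: D_def n_def)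
  show ?case
    by (rule exI[of _ U], rule exI[of _ D], insert U D UU UU' dD AU, auto simp: n_def)
qed




lemma mult_carrier_sq[simp]: "A \<in> carrier_mat n n \<Longrightarrow> B \<in> carrier_mat n n \<Longrightarrow> A * B \<in> carrier_mat n n"
  by (metis mult_carrier_mat)

lemma conj_unit_vec: "conjugate (unit_vec n i :: complex vec) = unit_vec n i"
  by (rule eq_vecI, auto simp: unit_vec_def)

lemma qf_unit: assumes "A \<in> carrier_mat n n" "i < n"
  shows "qf A (unit_vec n i) = A $$ (i,i)"
  using assms unfolding qf_def conj_unit_vec by (simp add: row_def)

definition dmat :: "nat \<Rightarrow> (nat \<Rightarrow> complex) \<Rightarrow> complex mat" where
  "dmat n f = mat n n (\<lambda>(i,j). if i = j then f i else 0)"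

lemma dmat_carrier[simp]: "dmat n f \<in> carrier_mat n n"
  by (simp add: dmat_def)

lemma dmat_mult: "dmat n f * dmat n g = dmat n (\<lambda>i. f i * g i)"
proof (rule eq_matI)
  fix i j assume "i < dim_row (dmat n (\<lambda>i. f i * g i))" "j < dim_col (dmat n (\<lambda>i. f i * g i))"
  hence i: "i < n" and j: "j < n" by (auto simp: dmat_def)
  have "(dmat n f * dmat n g) $$ (i,j) = (\<Sum>l\<in>{0..<n}. (if i = l then f i else 0) * (if l = j then g l else 0))"
    using i j by (simp add: dmat_def scalar_prod_def)
  also have "\<dots> = (\<Sum>l\<in>{0..<n}. if l = i then (if i = j then f i * g i else 0) else 0)"
    by (rule sum.cong, auto)
  also have "\<dots> = dmat n (\<lambda>i. f i * g i) $$ (i,j)" using i j by (simp add: dmat_def)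
  finally show "(dmat n f * dmat n g) $$ (i,j) = dmat n (\<lambda>i. f i * g i) $$ (i,j)" .
qed (auto simp: dmat_def)

lemma adj_dmat: "adj (dmat n f) = dmat n (\<lambda>i. cnj (f i))"
  by (rule eq_matI, auto simp: dmat_def)

lemma unitary_conj: assumes U: "U \<in> carrier_mat n n" and UU: "adj U * U = 1\<^sub>m n" and D: "D \<in> carrier_mat n n"
  shows "adj U * (U * D * adj U) * U = D"
proof -
  have aU: "adj U \<in> carrier_mat n n" using U by simp
  have "adj U * (U * D * adj U) * U = adj U * (U * (D * (adj U * U)))"
    using U D aU by (simp add: assoc_mult_mat[of _ n n _ n _ n])
  also have "\<dots> = D" using U D aU UU cancel_left[OF aU U UU D] by simp
  finally show ?thesis .
qed

lemma psd_sqrt_exists: assumes M: "psd M" "M \<in> carrier_mat n n"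
  shows "\<exists>S. S \<in> carrier_mat n n \<and> psd S \<and> S * S = M"
proof -
  from spectral[OF M(2) psdD(1)[OF M]] obtain U D where U: "U \<in> carrier_mat n n"
    and D: "D \<in> carrier_mat n n" and UU: "adj U * U = 1\<^sub>m n" and UU': "U * adj U = 1\<^sub>m n"
    and dD: "\<forall>i<n. \<forall>j<n. i \<noteq> j \<longrightarrow> D $$ (i,j) = 0" and MU: "M = U * D * adj U" by blast
  have aU: "adj U \<in> carrier_mat n n" using U by simp
  have DM: "D = adj U * M * U" unfolding MU using unitary_conj[OF U UU D] by simp
  have pD: "psd D" unfolding DM by (rule psd_congr[OF M U])
  have dge: "D $$ (i,i) \<ge> 0" if "i < n" for i
    using psdD(2)[OF pD D, of "unit_vec n i"] qf_unit[OF D that] that by simp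
  define s where "s i = sqrt (max 0 (Re (D $$ (i,i))))" for i
  have s2: "complex_of_real (s i) * complex_of_real (s i) = D $$ (i,i)" if "i < n" for i
  proof -
    have "Re (D $$ (i,i)) \<ge> 0" "Im (D $$ (i,i)) = 0" using dge[OF that] by (auto simp: less_eq_complex_def)
    thus ?thesis unfolding s_def by (simp flip: of_real_mult add: complex_eq_iff)
  qed
  have Dd: "D = dmat n (\<lambda>i. D $$ (i,i))"
    by (rule eq_matI, insert D dD, auto simp: dmat_def)
  define F where "F = dmat n (\<lambda>i. complex_of_real (sqrt (s i)))"
  define Q where "Q = dmat n (\<lambda>i. complex_of_real (s i))"
  have FF: "adj F * F = Q" unfolding F_def Q_def adj_dmat dmat_mult
    by (rule arg_cong[where f = "dmat n"], rule ext, simp flip: of_real_mult add: s_def)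
  have QQ': "Q * Q = dmat n (\<lambda>i. D $$ (i,i))" unfolding Q_def dmat_mult
    by (rule eq_matI, auto simp: dmat_def s2)
  have QQ: "Q * Q = D" using QQ' Dd by simp
  define S where "S = U * Q * adj U"
  have Q: "Q \<in> carrier_mat n n" "F \<in> carrier_mat n n" by (auto simp: Q_def F_def)
  have "S = adj (F * adj U) * (F * adj U)"
  proof -
    have "adj (F * adj U) = U * adj F" by (subst adj_mult[of _ n n _ n], insert Q U, auto)
    thus ?thesis unfolding S_def FF[symmetric] using U Q aU by (simp add: assoc_mult_mat[of _ n n _ n _ n])
  qed
  hence pS: "psd S" using psd_gram[of "F * adj U" n n] Q aU by simp
  have "S * S = U * (Q * (adj U * (U * (Q * adj U))))" unfolding S_def using U Q aU by (simp add: assoc_mult_mat[of _ n n _ n _ n])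
  also have "\<dots> = U * (Q * Q * adj U)" using cancel_left[OF aU U UU, of "Q * adj U" n] U Q aU by (simp add: assoc_mult_mat[of _ n n _ n _ n])
  also have "\<dots> = M" unfolding QQ MU using U D aU by (simp add: assoc_mult_mat[of _ n n _ n _ n])
  finally have SS: "S * S = M" .
  have Sc: "S \<in> carrier_mat n n" unfolding S_def using U Q aU by simp
  show ?thesis using Sc pS SS by blast
qed

lemma mat_eq_of_minus: fixes S T :: "complex mat"
  assumes "S \<in> carrier_mat n m" "T \<in> carrier_mat n m" "S - T = 0\<^sub>m n m" shows "S = T"
proof (rule eq_matI)
  fix i j assume "i < dim_row T" "j < dim_col T"
  hence ij: "i < n" "j < m" using assms by auto
  have "S $$ (i,j) - T $$ (i,j) = (S - T) $$ (i,j)" using index_minus_mat(1)[of i T j S] ij assms by simp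
  also have "\<dots> = 0" using assms(3) ij by simp
  finally show "S $$ (i,j) = T $$ (i,j)" by simp
qed (insert assms, auto)

lemma psd_sqrt_unique: assumes S: "S \<in> carrier_mat n n" "psd S" and T: "T \<in> carrier_mat n n" "psd T"
  and ST: "S * S = T * T"
  shows "S = T"
proof -
  obtain G where G: "G \<in> carrier_mat n n" "psd G" "G * G = S" using psd_sqrt_exists[OF S(2,1)] by blast
  obtain H where H: "H \<in> carrier_mat n n" "psd H" "H * H = T" using psd_sqrt_exists[OF T(2,1)] by blast
  have hS: "adj S = S" using psdD(1)[OF S(2,1)] .
  have hT: "adj T = T" using psdD(1)[OF T(2,1)] .
  have hG: "adj G = G" using psdD(1)[OF G(2,1)] .
  have hH: "adj H = H" using psdD(1)[OF H(2,1)] .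
  define D where "D = S - T"
  have Dc: "D \<in> carrier_mat n n" using T(1) by (simp add: D_def minus_carrier_mat)
  have hD: "adj D = D" unfolding D_def using S T hS hT by (simp add: adj_minus)
  have SD: "S * D = - (D * T)"
  proof -
    have "S * D = S * S - S * T" unfolding D_def using S T by (simp add: mult_minus_distrib_mat)
    also have "\<dots> = - (S * T - T * T)" using ST S T
      by (intro eq_matI, auto)
    also have "S * T - T * T = D * T" unfolding D_def using S T by (simp add: minus_mult_distrib_mat)
    finally show ?thesis .
  qed
  have gramG: "D * (S * D) = adj (G * D) * (G * D)"
  proof -
    have "adj (G * D) = D * G" using adj_mult[OF G(1) Dc] hG hD by simp
    thus ?thesis using G Dc by (simp add: G(3)[symmetric] assoc_mult_mat[of _ n n _ n _ n])
  qed
  have gramH: "D * (T * D) = adj (H * D) * (H * D)"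
  proof -
    have "adj (H * D) = D * H" using adj_mult[OF H(1) Dc] hH hD by simp
    thus ?thesis using H Dc by (simp add: H(3)[symmetric] assoc_mult_mat[of _ n n _ n _ n])
  qed
  have tr: "mtrace (D * (S * D)) = - mtrace (D * (T * D))"
  proof -
    have "mtrace (D * (S * D)) = mtrace (S * D * D)"
      by (rule mtrace_comm[of _ n n], insert S Dc, auto)
    also have "S * D * D = - (D * T * D)" unfolding SD using Dc T
      by (intro eq_matI, auto)
    also have "mtrace \<dots> = - mtrace (D * T * D)" by (rule mtrace_uminus, insert Dc T, auto)
    also have "D * T * D = D * (T * D)" using Dc T by simp
    finally show ?thesis .
  qed
  have r1: "Re (mtrace (adj (G * D) * (G * D))) \<ge> 0"
    using mtrace_gram[of "G * D" n n] G Dc by (simp add: sum_nonneg)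
  have r2: "Re (mtrace (adj (H * D) * (H * D))) \<ge> 0"
    using mtrace_gram[of "H * D" n n] H Dc by (simp add: sum_nonneg)
  have e1: "Re (mtrace (adj (G * D) * (G * D))) \<le> 0" using tr r2 unfolding gramG gramH by simp
  have e2: "Re (mtrace (adj (H * D) * (H * D))) \<le> 0" using tr r1 unfolding gramG gramH by simp
  have GD: "G * D = 0\<^sub>m n n" by (rule gram_zero[OF _ e1], insert G Dc, auto)
  have HD: "H * D = 0\<^sub>m n n" by (rule gram_zero[OF _ e2], insert H Dc, auto)
  have SD0: "S * D = 0\<^sub>m n n"
  proof -
    have "S * D = G * (G * D)" using assoc_mult_mat[OF G(1) G(1) Dc] G(3) by simp
    thus ?thesis using GD by (simp add: right_mult_zero_mat[OF G(1)])
  qed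
  have TD0: "T * D = 0\<^sub>m n n"
  proof -
    have "T * D = H * (H * D)" using assoc_mult_mat[OF H(1) H(1) Dc] H(3) by simp
    thus ?thesis using HD by (simp add: right_mult_zero_mat[OF H(1)])
  qed
  have "(S - T) * D = S * D - T * D" by (rule minus_mult_distrib_mat[OF S(1) T(1) Dc])
  hence "D * D = 0\<^sub>m n n - 0\<^sub>m n n" unfolding SD0 TD0 D_def[symmetric] .
  hence "adj D * D = 0\<^sub>m n n" unfolding hD by (simp add: eq_matI)
  hence "Re (mtrace (adj D * D)) \<le> 0" by (simp add: mtrace_def)
  hence "D = 0\<^sub>m n n" by (rule gram_zero[OF Dc])
  thus ?thesis using mat_eq_of_minus[OF S(1) T(1)] by (simp add: D_def)
qed

lemma msqrt_eq: assumes "M \<in> carrier_mat n n" "S \<in> carrier_mat n n" "psd S" "S * S = M"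
  shows "msqrt M = S"
  unfolding msqrt_def
proof (rule the_equality)
  show "S \<in> carrier_mat (dim_row M) (dim_row M) \<and> psd S \<and> S * S = M" using assms by auto
  fix S' assume "S' \<in> carrier_mat (dim_row M) (dim_row M) \<and> psd S' \<and> S' * S' = M"
  thus "S' = S" using psd_sqrt_unique[of S' n S] assms by auto
qed

lemma msqrt_props: assumes "psd M" "M \<in> carrier_mat n n"
  shows "msqrt M \<in> carrier_mat n n" "psd (msqrt M)" "msqrt M * msqrt M = M"
proof -
  obtain S where S: "S \<in> carrier_mat n n" "psd S" "S * S = M" using psd_sqrt_exists[OF assms] by blast
  have "msqrt M = S" by (rule msqrt_eq[OF assms(2) S])
  thus "msqrt M \<in> carrier_mat n n" "psd (msqrt M)" "msqrt M * msqrt M = M" using S by auto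
qed




lemma mod_lt_mult[simp]: "i < a * (b::nat) \<Longrightarrow> i mod b < b"
  by (metis mod_less_divisor mult_0_right not_less0 gr0I)

lemma div_lt_mult[simp]: "i < a * (b::nat) \<Longrightarrow> i div b < a"
  by (simp add: less_mult_imp_div_less)

lemma sum_lessThan_add: fixes k :: nat shows "(\<Sum>i<m+k. f i) = (\<Sum>i<m. f i) + (\<Sum>i<k. f (m + i))"
  by (induction k, auto simp: add.assoc)

lemma sum_split: fixes a b :: nat shows "(\<Sum>i<a*b. f i) = (\<Sum>x<a. \<Sum>y<b. f (x*b + y))"
proof (induction a)
  case (Suc a)
  have "(\<Sum>i<Suc a * b. f i) = (\<Sum>i<a*b + b. f i)" by (simp add: add.commute)
  also have "\<dots> = (\<Sum>i<a*b. f i) + (\<Sum>y<b. f (a*b + y))" by (rule sum_lessThan_add)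
  finally show ?case using Suc by simp
qed simp

lemma kron_dims[simp]: "dim_row (kron A B) = dim_row A * dim_row B" "dim_col (kron A B) = dim_col A * dim_col B"
  by (auto simp: kron_def)

lemma kron_carrier[simp]: "A \<in> carrier_mat n1 m1 \<Longrightarrow> B \<in> carrier_mat n2 m2 \<Longrightarrow> kron A B \<in> carrier_mat (n1*n2) (m1*m2)"
  by (metis carrier_matD carrier_matI kron_dims)

lemma kron_index: "i < dim_row A * dim_row B \<Longrightarrow> j < dim_col A * dim_col B \<Longrightarrow>
  kron A B $$ (i,j) = A $$ (i div dim_row B, j div dim_col B) * B $$ (i mod dim_row B, j mod dim_col B)"
  by (simp add: kron_def)

lemma kron_mult: assumes A: "A \<in> carrier_mat n1 k1" and B: "B \<in> carrier_mat n2 k2"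
  and C: "C \<in> carrier_mat k1 m1" and D: "D \<in> carrier_mat k2 m2"
  shows "kron A B * kron C D = kron (A * C) (B * D)"
proof (rule eq_matI)
  fix i j assume "i < dim_row (kron (A * C) (B * D))" "j < dim_col (kron (A * C) (B * D))"
  hence i: "i < n1 * n2" and j: "j < m1 * m2" using A B C D by auto
  have i1: "i div n2 < n1" and j1: "j div m2 < m1" using i j
    by (simp_all add: less_mult_imp_div_less)
  have n2: "n2 > 0" and m2: "m2 > 0" using i j by (auto intro: gr0I)
  have "(kron A B * kron C D) $$ (i,j) =
    (\<Sum>l<k1*k2. (A $$ (i div n2, l div k2) * B $$ (i mod n2, l mod k2)) *
                 (C $$ (l div k2, j div m2) * D $$ (l mod k2, j mod m2)))"
    using A B C D i j by (simp add: scalar_prod_def atLeast0LessThan kron_index)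
  also have "\<dots> = (\<Sum>x<k1. \<Sum>y<k2. (A $$ (i div n2, x) * B $$ (i mod n2, y)) *
                 (C $$ (x, j div m2) * D $$ (y, j mod m2)))"
    by (subst sum_split, rule sum.cong, simp, rule sum.cong, auto)
  also have "\<dots> = (\<Sum>x<k1. A $$ (i div n2, x) * C $$ (x, j div m2)) *
       (\<Sum>y<k2. B $$ (i mod n2, y) * D $$ (y, j mod m2))"
    by (simp add: sum_product mult_ac)
  also have "\<dots> = kron (A * C) (B * D) $$ (i,j)"
    using A B C D i j i1 j1 n2 m2 by (simp add: kron_index scalar_prod_def atLeast0LessThan)
  finally show "(kron A B * kron C D) $$ (i,j) = kron (A * C) (B * D) $$ (i,j)" .
qed (insert A B C D, auto)

lemma adj_kron: "adj (kron A B) = kron (adj A) (adj B)"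
proof (rule eq_matI)
  fix i j assume "i < dim_row (kron (adj A) (adj B))" "j < dim_col (kron (adj A) (adj B))"
  hence i: "i < dim_col A * dim_col B" and j: "j < dim_row A * dim_row B" by auto
  have "dim_col B > 0" "dim_row B > 0" using i j by (auto intro: gr0I)
  thus "adj (kron A B) $$ (i,j) = kron (adj A) (adj B) $$ (i,j)"
    using i j by (simp add: kron_index less_mult_imp_div_less)
qed auto

lemma kron_add_left: "A \<in> carrier_mat n1 m1 \<Longrightarrow> A' \<in> carrier_mat n1 m1 \<Longrightarrow>
   kron (A + A') B = kron A B + kron A' B"
  by (rule eq_matI, auto simp: kron_index less_mult_imp_div_less distrib_right)

lemma kron_minus_left: "A \<in> carrier_mat n1 m1 \<Longrightarrow> A' \<in> carrier_mat n1 m1 \<Longrightarrow>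
   kron (A - A') B = kron A B - kron A' B"
  by (rule eq_matI, auto simp: kron_index less_mult_imp_div_less left_diff_distrib)

lemma kron_add_right: "B \<in> carrier_mat n2 m2 \<Longrightarrow> B' \<in> carrier_mat n2 m2 \<Longrightarrow>
   kron A (B + B') = kron A B + kron A B'"
  by (rule eq_matI, auto simp: kron_index distrib_left)

lemma kron_smult_left: "kron (c \<cdot>\<^sub>m A) B = c \<cdot>\<^sub>m kron A B"
  by (rule eq_matI, auto simp: kron_index less_mult_imp_div_less)

lemma kron_smult_right: "kron A (c \<cdot>\<^sub>m B) = c \<cdot>\<^sub>m kron A B"
  by (rule eq_matI, auto simp: kron_index)

lemma kron_zero_right: "kron A (0\<^sub>m n2 m2) = 0\<^sub>m (dim_row A * n2) (dim_col A * m2)"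
  by (rule eq_matI, auto simp: kron_index)

lemma mtrace_kron: assumes "A \<in> carrier_mat n1 n1" "B \<in> carrier_mat n2 n2"
  shows "mtrace (kron A B) = mtrace A * mtrace B"
proof -
  have "mtrace (kron A B) = (\<Sum>i<n1*n2. A $$ (i div n2, i div n2) * B $$ (i mod n2, i mod n2))"
    using assms by (simp add: mtrace_def kron_index)
  also have "\<dots> = (\<Sum>x<n1. \<Sum>y<n2. A $$ (x, x) * B $$ (y, y))"
    by (subst sum_split, rule sum.cong, simp, rule sum.cong, auto)
  also have "\<dots> = mtrace A * mtrace B" using assms by (simp add: mtrace_def sum_product)
  finally show ?thesis .
qed

lemma psd_kron: assumes A: "psd A" "A \<in> carrier_mat n1 n1" and B: "psd B" "B \<in> carrier_mat n2 n2"
  shows "psd (kron A B)"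
proof -
  have G: "msqrt A \<in> carrier_mat n1 n1" "psd (msqrt A)" "msqrt A * msqrt A = A" using msqrt_props[OF A] by auto
  have K: "msqrt B \<in> carrier_mat n2 n2" "psd (msqrt B)" "msqrt B * msqrt B = B" using msqrt_props[OF B] by auto
  have hG: "adj (msqrt A) = msqrt A" using psdD(1)[OF G(2,1)] .
  have hK: "adj (msqrt B) = msqrt B" using psdD(1)[OF K(2,1)] .
  have "kron A B = adj (kron (msqrt A) (msqrt B)) * kron (msqrt A) (msqrt B)"
    unfolding adj_kron hG hK using kron_mult[OF G(1) K(1) G(1) K(1)] G(3) K(3) by simp
  thus ?thesis using psd_gram[of "kron (msqrt A) (msqrt B)" "n1*n2" "n1*n2"] G K by simp
qed




lemma idx_lt: "a < d \<Longrightarrow> b < n \<Longrightarrow> a*n + b < d*(n::nat)"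
proof -
  assume "a < d" "b < n"
  hence "Suc a * n \<le> d * n" by (intro mult_le_mono1, simp)
  thus ?thesis using \<open>b < n\<close> by simp
qed

lemma im0: "i mod (m*4) = 4*(i div 4 mod m) + i mod (4::nat)"
  using mod_mult2_eq[of i 4 m] by (simp add: mult.commute)
lemma im1: "(i mod (m*4)) div 4 = i div 4 mod (m::nat)"
  unfolding im0 by simp
lemma im2: "(i mod (m*4)) mod 4 = i mod (4::nat)"
  unfolding im0 by simp
lemma im3: "i div (m*4) = i div 4 div (m::nat)"
  using div_mult2_eq[of i 4 m] by (simp add: mult.commute)
lemma im4: "(a*(m*4) + b) div 4 = a*m + b div (4::nat)"
  by simp
lemma im5: "(a*(m*4) + b) mod 4 = b mod (4::nat)"
proof -
  have "a*(m*4) + b = b + (a*m)*4" by simp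
  thus ?thesis by (metis mod_mult_self1)
qed

lemma block_carrier[simp]: "block d n b c X \<in> carrier_mat d d"
  by (simp add: block_def)

lemma tid_dims[simp]: "dim_row (tensor_id d d' n \<Lambda> X) = d'*n" "dim_col (tensor_id d d' n \<Lambda> X) = d'*n"
  by (simp_all add: tensor_id_def)

lemma tid_carrier[simp]: "tensor_id d d' n \<Lambda> X \<in> carrier_mat (d'*n) (d'*n)"
  by (simp add: tensor_id_def)

lemma tid_index: "i < d'*n \<Longrightarrow> j < d'*n \<Longrightarrow>
  tensor_id d d' n \<Lambda> X $$ (i,j) = \<Lambda> (block d n (i mod n) (j mod n) X) $$ (i div n, j div n)"
  by (simp add: tensor_id_def)

lemma block_add: "X \<in> carrier_mat (d*n) (d*n) \<Longrightarrow> Y \<in> carrier_mat (d*n) (d*n) \<Longrightarrow> b < n \<Longrightarrow> c < n \<Longrightarrow>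
  block d n b c (X + Y) = block d n b c X + block d n b c Y"
  by (rule eq_matI, auto simp: block_def idx_lt)

lemma block_smult: "X \<in> carrier_mat (d*n) (d*n) \<Longrightarrow> b < n \<Longrightarrow> c < n \<Longrightarrow>
  block d n b c (k \<cdot>\<^sub>m X) = k \<cdot>\<^sub>m block d n b c X"
  by (rule eq_matI, auto simp: block_def idx_lt)

lemma cptpD: assumes "cptp d d' \<Lambda>"
  shows "\<And>X. X \<in> carrier_mat d d \<Longrightarrow> \<Lambda> X \<in> carrier_mat d' d'"
    "\<And>X Y. X \<in> carrier_mat d d \<Longrightarrow> Y \<in> carrier_mat d d \<Longrightarrow> \<Lambda> (X + Y) = \<Lambda> X + \<Lambda> Y"
    "\<And>c X. X \<in> carrier_mat d d \<Longrightarrow> \<Lambda> (c \<cdot>\<^sub>m X) = c \<cdot>\<^sub>m \<Lambda> X"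
    "\<And>X. X \<in> carrier_mat d d \<Longrightarrow> mtrace (\<Lambda> X) = mtrace X"
    "\<And>n X. X \<in> carrier_mat (d*n) (d*n) \<Longrightarrow> psd X \<Longrightarrow> psd (tensor_id d d' n \<Lambda> X)"
  using assms unfolding cptp_def by auto

lemma tid_add: assumes L: "cptp d d' \<Lambda>" and X: "X \<in> carrier_mat (d*n) (d*n)" and Y: "Y \<in> carrier_mat (d*n) (d*n)"
  shows "tensor_id d d' n \<Lambda> (X + Y) = tensor_id d d' n \<Lambda> X + tensor_id d d' n \<Lambda> Y"
proof (rule eq_matI)
  fix i j assume "i < dim_row (tensor_id d d' n \<Lambda> X + tensor_id d d' n \<Lambda> Y)"
    "j < dim_col (tensor_id d d' n \<Lambda> X + tensor_id d d' n \<Lambda> Y)"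
  hence i: "i < d'*n" and j: "j < d'*n" by (auto simp: tensor_id_def)
  have c1: "\<Lambda> (block d n (i mod n) (j mod n) X) \<in> carrier_mat d' d'" by (rule cptpD(1)[OF L], simp)
  have c2: "\<Lambda> (block d n (i mod n) (j mod n) Y) \<in> carrier_mat d' d'" by (rule cptpD(1)[OF L], simp)
  show "tensor_id d d' n \<Lambda> (X + Y) $$ (i,j) = (tensor_id d d' n \<Lambda> X + tensor_id d d' n \<Lambda> Y) $$ (i,j)"
    using i j c1 c2 X Y by (simp add: tid_index block_add cptpD(2)[OF L])
qed (auto simp: tensor_id_def)

lemma tid_smult: assumes L: "cptp d d' \<Lambda>" and X: "X \<in> carrier_mat (d*n) (d*n)"
  shows "tensor_id d d' n \<Lambda> (k \<cdot>\<^sub>m X) = k \<cdot>\<^sub>m tensor_id d d' n \<Lambda> X"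
proof (rule eq_matI)
  fix i j assume "i < dim_row (k \<cdot>\<^sub>m tensor_id d d' n \<Lambda> X)" "j < dim_col (k \<cdot>\<^sub>m tensor_id d d' n \<Lambda> X)"
  hence i: "i < d'*n" and j: "j < d'*n" by (auto simp: tensor_id_def)
  have c1: "\<Lambda> (block d n (i mod n) (j mod n) X) \<in> carrier_mat d' d'" by (rule cptpD(1)[OF L], simp)
  show "tensor_id d d' n \<Lambda> (k \<cdot>\<^sub>m X) $$ (i,j) = (k \<cdot>\<^sub>m tensor_id d d' n \<Lambda> X) $$ (i,j)"
    using i j c1 X by (simp add: tid_index block_smult cptpD(3)[OF L])
qed (auto simp: tensor_id_def)

lemma minus_as_add: fixes X Y :: "complex mat"
  shows "X \<in> carrier_mat a b \<Longrightarrow> Y \<in> carrier_mat a b \<Longrightarrow> X - Y = X + (-1) \<cdot>\<^sub>m Y"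
  by (rule eq_matI, auto)

lemma tid_minus: assumes L: "cptp d d' \<Lambda>" and X: "X \<in> carrier_mat (d*n) (d*n)" and Y: "Y \<in> carrier_mat (d*n) (d*n)"
  shows "tensor_id d d' n \<Lambda> (X - Y) = tensor_id d d' n \<Lambda> X - tensor_id d d' n \<Lambda> Y"
proof -
  have "tensor_id d d' n \<Lambda> (X - Y) = tensor_id d d' n \<Lambda> X + (-1) \<cdot>\<^sub>m tensor_id d d' n \<Lambda> Y"
    unfolding minus_as_add[OF X Y] using X Y by (simp add: tid_add[OF L] tid_smult[OF L])
  also have "\<dots> = tensor_id d d' n \<Lambda> X - tensor_id d d' n \<Lambda> Y"
    by (rule minus_as_add[symmetric], auto)
  finally show ?thesis .
qed

lemma tid_trace: assumes L: "cptp d d' \<Lambda>" and X: "X \<in> carrier_mat (d*n) (d*n)"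
  shows "mtrace (tensor_id d d' n \<Lambda> X) = mtrace X"
proof -
  have "mtrace (tensor_id d d' n \<Lambda> X) = (\<Sum>i<d'*n. \<Lambda> (block d n (i mod n) (i mod n) X) $$ (i div n, i div n))"
    by (simp add: mtrace_def tid_index)
  also have "\<dots> = (\<Sum>a<d'. \<Sum>b<n. \<Lambda> (block d n b b X) $$ (a, a))"
    by (subst sum_split, rule sum.cong, simp, rule sum.cong, auto)
  also have "\<dots> = (\<Sum>b<n. \<Sum>a<d'. \<Lambda> (block d n b b X) $$ (a, a))" by (rule sum.swap)
  also have "\<dots> = (\<Sum>b<n. mtrace (\<Lambda> (block d n b b X)))"
    by (rule sum.cong, simp, simp add: mtrace_def cptpD(1)[OF L, THEN carrier_matD(1)])
  also have "\<dots> = (\<Sum>b<n. mtrace (block d n b b X))" by (simp add: cptpD(4)[OF L])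
  also have "\<dots> = (\<Sum>b<n. \<Sum>a<d. X $$ (a*n+b, a*n+b))" by (simp add: mtrace_def block_def)
  also have "\<dots> = (\<Sum>a<d. \<Sum>b<n. X $$ (a*n+b, a*n+b))" by (rule sum.swap)
  also have "\<dots> = mtrace X" using X by (simp add: mtrace_def sum_split)
  finally show ?thesis .
qed




lemma four_cases: "(r::nat) < 4 \<Longrightarrow> r = 0 \<or> r = 1 \<or> r = 2 \<or> r = 3" by presburger

lemma sum4: "(\<Sum>l\<in>{0..<4::nat}. f l) = f 0 + f 1 + f 2 + f 3"
  by (simp add: numeral_eq_Suc atLeast0LessThan lessThan_Suc add_ac)

lemma psi_carrier[simp]: "psi_plus_proj \<in> carrier_mat 4 4" "psi_minus_proj \<in> carrier_mat 4 4"
  by (auto simp: psi_plus_proj_def psi_minus_proj_def)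

lemma psi_dims[simp]: "dim_row psi_plus_proj = 4" "dim_col psi_plus_proj = 4"
   "dim_row psi_minus_proj = 4" "dim_col psi_minus_proj = 4"
  by (auto simp: psi_plus_proj_def psi_minus_proj_def)

definition H1 :: "complex mat" where "H1 = dmat 4 (\<lambda>i. if i = 1 \<or> i = 2 then 1/2 else 0)"
definition H0 :: "complex mat" where "H0 = mat 4 4 (\<lambda>(i,j). if (i = 0 \<and> j = 3) \<or> (i = 3 \<and> j = 0) then 1/2 else 0)"
definition H0' :: "complex mat" where "H0' = dmat 4 (\<lambda>i. if i = 0 \<or> i = 3 then 1/2 else 0)"

lemma H_carrier[simp]: "H1 \<in> carrier_mat 4 4" "H0 \<in> carrier_mat 4 4" "H0' \<in> carrier_mat 4 4"
  by (auto simp: H1_def H0_def H0'_def)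

lemma H_dims[simp]: "dim_row H1 = 4" "dim_col H1 = 4" "dim_row H0 = 4" "dim_col H0 = 4"
  "dim_row H0' = 4" "dim_col H0' = 4"
  by (auto simp: H1_def H0_def H0'_def dmat_def)

lemma psi_plus_pt: assumes "r < 4" "s < 4"
  shows "psi_plus_proj $$ ((r div 2)*2 + s mod 2, (s div 2)*2 + r mod 2) = H1 $$ (r,s) + H0 $$ (r,s)"
  using four_cases[OF assms(1)] four_cases[OF assms(2)]
  by (auto simp: psi_plus_proj_def H1_def H0_def dmat_def)

lemma psi_minus_pt: assumes "r < 4" "s < 4"
  shows "psi_minus_proj $$ ((r div 2)*2 + s mod 2, (s div 2)*2 + r mod 2) = H1 $$ (r,s) - H0 $$ (r,s)"
  using four_cases[OF assms(1)] four_cases[OF assms(2)]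
  by (auto simp: psi_minus_proj_def H1_def H0_def dmat_def)

lemma H1H1: "H1 * H1 = dmat 4 (\<lambda>i. if i = 1 \<or> i = 2 then 1/4 else 0)"
  unfolding H1_def dmat_mult by (rule arg_cong[where f = "dmat 4"], auto)

lemma H0'H0': "H0' * H0' = dmat 4 (\<lambda>i. if i = 0 \<or> i = 3 then 1/4 else 0)"
  unfolding H0'_def dmat_mult by (rule arg_cong[where f = "dmat 4"], auto)

lemma H0H0: "H0 * H0 = dmat 4 (\<lambda>i. if i = 0 \<or> i = 3 then 1/4 else 0)"
proof (rule eq_matI)
  fix i j assume "i < dim_row (dmat 4 (\<lambda>i. if i = 0 \<or> i = 3 then 1/4 else (0::complex)))"
     "j < dim_col (dmat 4 (\<lambda>i. if i = 0 \<or> i = 3 then 1/4 else (0::complex)))"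
  hence i: "i < 4" and j: "j < 4" by (auto simp: dmat_def)
  show "(H0 * H0) $$ (i,j) = dmat 4 (\<lambda>i. if i = 0 \<or> i = 3 then 1/4 else 0) $$ (i,j)"
    using i j four_cases[OF i] four_cases[OF j]
    by (auto simp: scalar_prod_def sum4 H0_def dmat_def)
qed (auto simp: dmat_def)

lemma H1H0: "H1 * H0 = 0\<^sub>m 4 4"
proof (rule eq_matI)
  fix i j assume "i < dim_row (0\<^sub>m 4 4 :: complex mat)" "j < dim_col (0\<^sub>m 4 4 :: complex mat)"
  hence i: "i < 4" and j: "j < 4" by auto
  show "(H1 * H0) $$ (i,j) = 0\<^sub>m 4 4 $$ (i,j)"
    using i j four_cases[OF i] four_cases[OF j]
    by (auto simp: scalar_prod_def sum4 H0_def H1_def dmat_def)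
qed auto

lemma H0H1: "H0 * H1 = 0\<^sub>m 4 4"
proof (rule eq_matI)
  fix i j assume "i < dim_row (0\<^sub>m 4 4 :: complex mat)" "j < dim_col (0\<^sub>m 4 4 :: complex mat)"
  hence i: "i < 4" and j: "j < 4" by auto
  show "(H0 * H1) $$ (i,j) = 0\<^sub>m 4 4 $$ (i,j)"
    using i j four_cases[OF i] four_cases[OF j]
    by (auto simp: scalar_prod_def sum4 H0_def H1_def dmat_def)
qed auto

lemma H1H0': "H1 * H0' = 0\<^sub>m 4 4"
  unfolding H1_def H0'_def dmat_mult by (rule eq_matI, auto simp: dmat_def)

lemma H0'H1: "H0' * H1 = 0\<^sub>m 4 4"
  unfolding H1_def H0'_def dmat_mult by (rule eq_matI, auto simp: dmat_def)

lemma adj_H: "adj H1 = H1" "adj H0 = H0"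
  by (rule eq_matI, auto simp: H1_def H0_def dmat_def)+

lemma psd_dmat: assumes "\<And>i. f i = complex_of_real (r i)" "\<And>i. r i \<ge> 0"
  shows "psd (dmat n f)"
proof -
  have "dmat n f = adj (dmat n (\<lambda>i. complex_of_real (sqrt (r i)))) * dmat n (\<lambda>i. complex_of_real (sqrt (r i)))"
    unfolding adj_dmat dmat_mult using assms
    by (intro arg_cong[where f = "dmat n"], auto simp flip: of_real_mult)
  thus ?thesis using psd_gram[of _ n n] by simp
qed

lemma psd_H: "psd H1" "psd H0'"
  unfolding H1_def H0'_def
  by (rule psd_dmat[of _ "\<lambda>i. if i = 1 \<or> i = 2 then 1/2 else 0"], auto)
     (rule psd_dmat[of _ "\<lambda>i. if i = 0 \<or> i = 3 then 1/2 else 0"], auto)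

lemma trace_H: "mtrace H1 = 1" "mtrace H0' = 1"
  by (auto simp: mtrace_def H1_def H0'_def dmat_def numeral_eq_Suc lessThan_Suc)

lemma mod_pt: "((i::nat) div 2 * 2 + j mod 2) mod 4 = (i mod 4) div 2 * 2 + (j mod 4) mod 2"
proof -
  have h1: "i div 2 = 2*(i div 4) + (i mod 4) div 2" by presburger
  have h2: "j mod 2 = (j mod 4) mod 2" by (simp add: mod_mod_cancel)
  have c: "(i mod 4) div 2 * 2 + (j mod 4) mod 2 < 4"
    using four_cases[of "i mod 4"] by auto
  have "i div 2 * 2 + j mod 2 = ((i mod 4) div 2 * 2 + (j mod 4) mod 2) + (i div 4) * 4"
    using h1 h2 by simp
  thus ?thesis using c by simp
qed

lemma ptrans_decomp: assumes X: "X \<in> carrier_mat n n" and Y: "Y \<in> carrier_mat n n"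
  shows "ptrans2 (n*2) 2 (kron X psi_plus_proj + kron Y psi_minus_proj) = kron (X + Y) H1 + kron (X - Y) H0"
proof (rule eq_matI)
  fix i j assume "i < dim_row (kron (X + Y) H1 + kron (X - Y) H0)" "j < dim_col (kron (X + Y) H1 + kron (X - Y) H0)"
  hence i: "i < n*4" and j: "j < n*4" using X Y by auto
  define I where "I = (i div 2)*2 + j mod 2"
  define J where "J = (j div 2)*2 + i mod 2"
  have I: "I < n*4" unfolding I_def using idx_lt[of "i div 2" "n*2" "j mod 2" 2] i by simp
  have J: "J < n*4" unfolding J_def using idx_lt[of "j div 2" "n*2" "i mod 2" 2] j by simp
  have Id: "I div 4 = i div 4" "J div 4 = j div 4" unfolding I_def J_def by presburger+
  have Im: "I mod 4 = ((i mod 4) div 2)*2 + (j mod 4) mod 2" "J mod 4 = ((j mod 4) div 2)*2 + (i mod 4) mod 2"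
    unfolding I_def J_def by (simp_all add: mod_pt)
  have r: "i mod 4 < 4" "j mod 4 < 4" by auto
  have "ptrans2 (n*2) 2 (kron X psi_plus_proj + kron Y psi_minus_proj) $$ (i,j) =
     (kron X psi_plus_proj + kron Y psi_minus_proj) $$ (I, J)"
    using i j unfolding ptrans2_def I_def J_def by simp
  also have "\<dots> = X $$ (i div 4, j div 4) * (H1 $$ (i mod 4, j mod 4) + H0 $$ (i mod 4, j mod 4))
      + Y $$ (i div 4, j div 4) * (H1 $$ (i mod 4, j mod 4) - H0 $$ (i mod 4, j mod 4))"
    using I J X Y by (simp add: kron_index Id Im psi_plus_pt[OF r] psi_minus_pt[OF r])
  also have "\<dots> = (kron (X + Y) H1 + kron (X - Y) H0) $$ (i,j)"
    using i j X Y by (simp add: kron_index algebra_simps)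
  finally show "ptrans2 (n*2) 2 (kron X psi_plus_proj + kron Y psi_minus_proj) $$ (i,j) =
     (kron (X + Y) H1 + kron (X - Y) H0) $$ (i,j)" .
qed (insert X Y, auto simp: ptrans2_def)

lemma tid_decomp: assumes L: "cptp d d' \<Lambda>" and r1: "\<rho>1 \<in> carrier_mat (d*m) (d*m)"
  and r2: "\<rho>2 \<in> carrier_mat (d*m) (d*m)"
  shows "tensor_id d d' (m*4) \<Lambda> (c1 \<cdot>\<^sub>m kron \<rho>1 psi_plus_proj + c2 \<cdot>\<^sub>m kron \<rho>2 psi_minus_proj)
    = kron (c1 \<cdot>\<^sub>m tensor_id d d' m \<Lambda> \<rho>1) psi_plus_proj + kron (c2 \<cdot>\<^sub>m tensor_id d d' m \<Lambda> \<rho>2) psi_minus_proj"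
  (is "tensor_id d d' (m*4) \<Lambda> ?R = ?rhs")
proof (rule eq_matI)
  fix i j assume "i < dim_row ?rhs" "j < dim_col ?rhs"
  hence i: "i < d'*m*4" and j: "j < d'*m*4" by auto
  define bi where "bi = i mod (m*4)"
  define bj where "bj = j mod (m*4)"
  have m0: "m*4 > 0" using i by (auto intro: gr0I)
  have bi: "bi < m*4" "bj < m*4" unfolding bi_def bj_def using m0 by auto
  define B1 where "B1 = block d m (i div 4 mod m) (j div 4 mod m) \<rho>1"
  define B2 where "B2 = block d m (i div 4 mod m) (j div 4 mod m) \<rho>2"
  have blk: "block d (m*4) bi bj ?R = (c1 * psi_plus_proj $$ (i mod 4, j mod 4)) \<cdot>\<^sub>m B1
        + (c2 * psi_minus_proj $$ (i mod 4, j mod 4)) \<cdot>\<^sub>m B2"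
  proof (rule eq_matI)
    fix a a' assume "a < dim_row ((c1 * psi_plus_proj $$ (i mod 4, j mod 4)) \<cdot>\<^sub>m B1
        + (c2 * psi_minus_proj $$ (i mod 4, j mod 4)) \<cdot>\<^sub>m B2)"
      "a' < dim_col ((c1 * psi_plus_proj $$ (i mod 4, j mod 4)) \<cdot>\<^sub>m B1
        + (c2 * psi_minus_proj $$ (i mod 4, j mod 4)) \<cdot>\<^sub>m B2)"
    hence a: "a < d" "a' < d" by (auto simp: B2_def block_def)
    have ia: "a*(m*4) + bi < d*m*4" "a'*(m*4) + bj < d*m*4"
      using idx_lt[OF a(1) bi(1)] idx_lt[OF a(2) bi(2)] by (simp_all add: mult.assoc)
    have q: "(a*(m*4) + bi) div 4 = a*m + i div 4 mod m" "(a'*(m*4) + bj) div 4 = a'*m + j div 4 mod m"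
      "(a*(m*4) + bi) mod 4 = i mod 4" "(a'*(m*4) + bj) mod 4 = j mod 4"
      unfolding im4 im5 bi_def bj_def im1 im2 by simp_all
    show "block d (m*4) bi bj ?R $$ (a,a') = ((c1 * psi_plus_proj $$ (i mod 4, j mod 4)) \<cdot>\<^sub>m B1
        + (c2 * psi_minus_proj $$ (i mod 4, j mod 4)) \<cdot>\<^sub>m B2) $$ (a,a')"
      using a ia r1 r2 by (simp add: block_def B1_def B2_def kron_index q mult_ac)
  qed (auto simp: B2_def block_def)
  have cB: "B1 \<in> carrier_mat d d" "B2 \<in> carrier_mat d d" by (auto simp: B1_def B2_def)
  have cL: "\<Lambda> B1 \<in> carrier_mat d' d'" "\<Lambda> B2 \<in> carrier_mat d' d'" using cptpD(1)[OF L] cB by auto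
  have qd: "i div (m*4) < d'" "j div (m*4) < d'" using i j by (auto simp: mult.assoc)
  have i4: "i div 4 < d' * m" "j div 4 < d' * m" using i j by auto
  have "tensor_id d d' (m*4) \<Lambda> ?R $$ (i,j) = \<Lambda> (block d (m*4) bi bj ?R) $$ (i div (m*4), j div (m*4))"
    unfolding bi_def bj_def using i j by (simp add: tid_index mult.assoc)
  also have "\<dots> = (c1 * psi_plus_proj $$ (i mod 4, j mod 4)) * \<Lambda> B1 $$ (i div (m*4), j div (m*4))
      + (c2 * psi_minus_proj $$ (i mod 4, j mod 4)) * \<Lambda> B2 $$ (i div (m*4), j div (m*4))"
    unfolding blk using cB cL qd by (simp add: cptpD(2,3)[OF L])
  also have "\<dots> = ?rhs $$ (i,j)"
    using i j i4 by (simp add: kron_index tid_index B1_def B2_def im3 mult_ac)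
  finally show "tensor_id d d' (m*4) \<Lambda> ?R $$ (i,j) = ?rhs $$ (i,j)" .
qed (auto simp: mult.assoc)




lemma kron_sq: assumes A: "A1 \<in> carrier_mat n n" "A2 \<in> carrier_mat n n"
  and B: "B1 \<in> carrier_mat k k" "B2 \<in> carrier_mat k k"
  and O: "B1 * B2 = 0\<^sub>m k k" "B2 * B1 = 0\<^sub>m k k"
  shows "(kron A1 B1 + kron A2 B2) * (kron A1 B1 + kron A2 B2) = kron (A1*A1) (B1*B1) + kron (A2*A2) (B2*B2)"
proof -
  have K: "kron A1 B1 \<in> carrier_mat (n*k) (n*k)" "kron A2 B2 \<in> carrier_mat (n*k) (n*k)" using A B by auto
  have K3: "kron A1 B1 + kron A2 B2 \<in> carrier_mat (n*k) (n*k)" using K by simp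
  have z1: "kron A1 B1 * kron A2 B2 = 0\<^sub>m (n*k) (n*k)"
    using kron_mult[OF A(1) B(1) A(2) B(2)] O A by (simp add: kron_zero_right)
  have z2: "kron A2 B2 * kron A1 B1 = 0\<^sub>m (n*k) (n*k)"
    using kron_mult[OF A(2) B(2) A(1) B(1)] O A by (simp add: kron_zero_right)
  have "(kron A1 B1 + kron A2 B2) * (kron A1 B1 + kron A2 B2) =
     kron A1 B1 * (kron A1 B1 + kron A2 B2) + kron A2 B2 * (kron A1 B1 + kron A2 B2)"
    using add_mult_distrib_mat[OF K(1) K(2) K3] .
  also have "\<dots> = (kron A1 B1 * kron A1 B1 + kron A1 B1 * kron A2 B2) + (kron A2 B2 * kron A1 B1 + kron A2 B2 * kron A2 B2)"
    using K by (simp add: mult_add_distrib_mat[of _ "n*k" "n*k"])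
  also have "\<dots> = kron A1 B1 * kron A1 B1 + kron A2 B2 * kron A2 B2"
    unfolding z1 z2 using K by simp
  also have "\<dots> = kron (A1*A1) (B1*B1) + kron (A2*A2) (B2*B2)"
    using kron_mult[OF A(1) B(1) A(1) B(1)] kron_mult[OF A(2) B(2) A(2) B(2)] by simp
  finally show ?thesis .
qed

theorem mainTheorem4:
  fixes d d' m :: nat and p1 p2 :: real
    and \<rho>1 \<rho>2 :: "complex mat" and \<Lambda> :: "complex mat \<Rightarrow> complex mat"
  assumes "density (d * m) \<rho>1" and "density (d * m) \<rho>2"
    and "p1 \<ge> 0" and "p2 \<ge> 0" and "p1 + p2 = 1"
    and "cptp d d' \<Lambda>"
  shows "let \<rho> = complex_of_real p1 \<cdot>\<^sub>m kron \<rho>1 psi_plus_proj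
                 + complex_of_real p2 \<cdot>\<^sub>m kron \<rho>2 psi_minus_proj
         in negativity (d' * m * 2) 2 (tensor_id d d' (m * 4) \<Lambda> \<rho>)
            = trace_norm (tensor_id d d' m \<Lambda>
                 (complex_of_real p1 \<cdot>\<^sub>m \<rho>1 - complex_of_real p2 \<cdot>\<^sub>m \<rho>2)) / 2"
proof -
  note L = assms(6)
  have r1: "\<rho>1 \<in> carrier_mat (d*m) (d*m)" "psd \<rho>1" "mtrace \<rho>1 = 1" using assms(1) by (auto simp: density_def)
  have r2: "\<rho>2 \<in> carrier_mat (d*m) (d*m)" "psd \<rho>2" "mtrace \<rho>2 = 1" using assms(2) by (auto simp: density_def)
  define s1 where "s1 = tensor_id d d' m \<Lambda> \<rho>1"
  define s2 where "s2 = tensor_id d d' m \<Lambda> \<rho>2"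
  have s1: "s1 \<in> carrier_mat (d'*m) (d'*m)" "psd s1" "mtrace s1 = 1"
    unfolding s1_def using cptpD(5)[OF L r1(1,2)] tid_trace[OF L r1(1)] r1 by auto
  have s2: "s2 \<in> carrier_mat (d'*m) (d'*m)" "psd s2" "mtrace s2 = 1"
    unfolding s2_def using cptpD(5)[OF L r2(1,2)] tid_trace[OF L r2(1)] r2 by auto
  define X where "X = complex_of_real p1 \<cdot>\<^sub>m s1"
  define Y where "Y = complex_of_real p2 \<cdot>\<^sub>m s2"
  have X: "X \<in> carrier_mat (d'*m) (d'*m)" "psd X" using s1 psd_smult[OF s1(2,1) assms(3)] by (auto simp: X_def)
  have Y: "Y \<in> carrier_mat (d'*m) (d'*m)" "psd Y" using s2 psd_smult[OF s2(2,1) assms(4)] by (auto simp: Y_def)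
  define W where "W = X + Y"
  define Z where "Z = X - Y"
  have W: "W \<in> carrier_mat (d'*m) (d'*m)" "psd W" unfolding W_def using X Y psd_add[OF X(2) Y(2) X(1) Y(1)] by auto
  have trW: "mtrace W = 1"
  proof -
    have "mtrace W = complex_of_real p1 * mtrace s1 + complex_of_real p2 * mtrace s2"
      unfolding W_def X_def Y_def using s1 s2 by (simp add: mtrace_add[of _ "d'*m"] mtrace_smult[of _ "d'*m"])
    also have "\<dots> = complex_of_real (p1 + p2)" using s1 s2 by simp
    finally show ?thesis using assms(5) by simp
  qed
  have Z: "Z \<in> carrier_mat (d'*m) (d'*m)" unfolding Z_def using X Y by auto
  have hZ: "adj Z = Z" unfolding Z_def using X Y psdD(1)[OF X(2,1)] psdD(1)[OF Y(2,1)] by (simp add: adj_minus)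
  have hW: "adj W = W" using psdD(1)[OF W(2,1)] .
  have ZZ: "psd (adj Z * Z)" "adj Z * Z \<in> carrier_mat (d'*m) (d'*m)" using psd_gram[OF Z] Z by auto
  define R where "R = msqrt (adj Z * Z)"
  have R: "R \<in> carrier_mat (d'*m) (d'*m)" "psd R" "R * R = Z * Z"
    using msqrt_props[OF ZZ] hZ unfolding R_def by auto
  have rhs: "tensor_id d d' m \<Lambda> (complex_of_real p1 \<cdot>\<^sub>m \<rho>1 - complex_of_real p2 \<cdot>\<^sub>m \<rho>2) = Z"
    unfolding Z_def X_def Y_def s1_def s2_def using r1 r2
    by (simp add: tid_minus[OF L] tid_smult[OF L])
  have tnZ: "trace_norm Z = Re (mtrace R)" unfolding trace_norm_def R_def ..
  have T: "tensor_id d d' (m * 4) \<Lambda> (complex_of_real p1 \<cdot>\<^sub>m kron \<rho>1 psi_plus_proj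
                 + complex_of_real p2 \<cdot>\<^sub>m kron \<rho>2 psi_minus_proj) = kron X psi_plus_proj + kron Y psi_minus_proj"
    unfolding X_def Y_def s1_def s2_def by (rule tid_decomp[OF L r1(1) r2(1)])
  define P where "P = kron W H1 + kron Z H0"
  have PT: "ptrans2 (d' * m * 2) 2 (kron X psi_plus_proj + kron Y psi_minus_proj) = P"
    unfolding P_def W_def Z_def by (rule ptrans_decomp[OF X(1) Y(1)])
  have Pc: "P \<in> carrier_mat (d'*m*4) (d'*m*4)" unfolding P_def using W Z by auto
  have hP: "adj P = P" unfolding P_def using W Z
    by (simp add: adj_add[of _ "d'*m*4" "d'*m*4"] adj_kron hW hZ adj_H)
  have PP: "adj P * P = kron (W*W) (H1*H1) + kron (Z*Z) (H0*H0)"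
    unfolding hP unfolding P_def by (rule kron_sq[OF W(1) Z H_carrier(1,2) H1H0 H0H1])
  define S where "S = kron W H1 + kron R H0'"
  have SS: "S * S = adj P * P" unfolding PP S_def
    using kron_sq[OF W(1) R(1) H_carrier(1,3) H1H0' H0'H1] R(3) H0'H0' H0H0 by simp
  have Sc: "S \<in> carrier_mat (d'*m*4) (d'*m*4)" unfolding S_def using W R by auto
  have pS: "psd S" unfolding S_def
    by (rule psd_add[OF psd_kron[OF W(2,1) psd_H(1) H_carrier(1)] psd_kron[OF R(2,1) psd_H(2) H_carrier(3)]],
        insert W R, auto)
  have "msqrt (adj P * P) = S" by (rule msqrt_eq[OF _ Sc pS SS], insert Pc, auto)
  hence tnP: "trace_norm P = Re (mtrace S)" unfolding trace_norm_def by simp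
  have trS: "mtrace S = mtrace W + mtrace R" unfolding S_def using W R
    by (simp add: mtrace_add[of _ "d'*m*4"] mtrace_kron[of _ "d'*m" _ 4] trace_H)
  show ?thesis unfolding Let_def T PT rhs negativity_def tnP tnZ trS trW by simp
qed


end
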